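(* Let $A$ be a C*-algebra and $V$ an Abelian annihilator of $A$. Then (a) $\mathcal{P}_V$ is a Boolean algebra; (b) each Abelian annihilator of $A$ is modular.
   Context: For a C*-algebra $B$ and $S\subseteq B$, $\mathrm{Ann}_B(S)=\{a\in B: as+sa=0\ \forall s\in S\}$, and $\mathcal{P}_B=\{V\subseteq B: V=\mathrm{Ann}_B(\mathrm{Ann}_B(S)) \text{ for some } S\subseteq B_+\}$ (ordered by inclusion) is the set of annihilators of $B$. An annihilator $V\in\mathcal{P}_A$ is Abelian if it is a commutative C*-subalgebra of $A$. For $V\in\mathcal{P}_A$ (a C*-subalgebra), $\mathcal{P}_V$ is the set of annihilators computed inside $V$; $V$ is modular if $\mathcal{P}_V$ is a modular lattice. *)

theory Defs
  imports "HOL-Analysis.Analysis"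
begin

class cstar_algebra = banach + real_normed_algebra +
  fixes cscale :: "complex \<Rightarrow> 'a \<Rightarrow> 'a"
    and adj :: "'a \<Rightarrow> 'a"
  assumes cscale_of_real: "cscale (complex_of_real r) x = scaleR r x"
    and cscale_add_left: "cscale (a + b) x = cscale a x + cscale b x"
    and cscale_add_right: "cscale a (x + y) = cscale a x + cscale a y"
    and cscale_cscale: "cscale a (cscale b x) = cscale (a * b) x"
    and cscale_one: "cscale 1 x = x"
    and norm_cscale: "norm (cscale a x) = cmod a * norm x"
    and cscale_mult_left: "cscale a (x * y) = cscale a x * y"
    and cscale_mult_right: "cscale a (x * y) = x * cscale a y"
    and adj_adj: "adj (adj x) = x"
    and adj_add: "adj (x + y) = adj x + adj y"
    and adj_cscale: "adj (cscale a x) = cscale (cnj a) (adj x)"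
    and adj_mult: "adj (x * y) = adj y * adj x"
    and cstar_identity: "norm (adj x * x) = (norm x)\<^sup>2"

definition cstar_subalgebra :: "'a::cstar_algebra set \<Rightarrow> bool" where
  "cstar_subalgebra B \<longleftrightarrow>
     0 \<in> B \<and> (\<forall>x\<in>B. \<forall>y\<in>B. x + y \<in> B \<and> x * y \<in> B)
     \<and> (\<forall>a. \<forall>x\<in>B. cscale a x \<in> B) \<and> (\<forall>x\<in>B. adj x \<in> B) \<and> closed B"

text \<open>Positive elements of a C*-subalgebra B: the elements of the form b* b with b in B.\<close>
definition pos_part :: "'a::cstar_algebra set \<Rightarrow> 'a set" where
  "pos_part B = {adj b * b | b. b \<in> B}"

definition Ann :: "'a::cstar_algebra set \<Rightarrow> 'a set \<Rightarrow> 'a set" where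
  "Ann B S = {a \<in> B. \<forall>s\<in>S. a * s + s * a = 0}"

definition annihilators :: "'a::cstar_algebra set \<Rightarrow> 'a set set" where
  "annihilators B = {V. \<exists>S. S \<subseteq> pos_part B \<and> V = Ann B (Ann B S)}"

definition abelian_annihilator :: "'a::cstar_algebra set \<Rightarrow> bool" where
  "abelian_annihilator V \<longleftrightarrow> V \<in> annihilators UNIV \<and> cstar_subalgebra V
     \<and> (\<forall>x\<in>V. \<forall>y\<in>V. x * y = y * x)"

definition is_lub_in :: "'b set set \<Rightarrow> 'b set \<Rightarrow> 'b set \<Rightarrow> 'b set \<Rightarrow> bool" where
  "is_lub_in L x y z \<longleftrightarrow> z \<in> L \<and> x \<subseteq> z \<and> y \<subseteq> z \<and> (\<forall>w\<in>L. x \<subseteq> w \<and> y \<subseteq> w \<longrightarrow> z \<subseteq> w)"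

definition is_glb_in :: "'b set set \<Rightarrow> 'b set \<Rightarrow> 'b set \<Rightarrow> 'b set \<Rightarrow> bool" where
  "is_glb_in L x y z \<longleftrightarrow> z \<in> L \<and> z \<subseteq> x \<and> z \<subseteq> y \<and> (\<forall>w\<in>L. w \<subseteq> x \<and> w \<subseteq> y \<longrightarrow> w \<subseteq> z)"

definition join_in :: "'b set set \<Rightarrow> 'b set \<Rightarrow> 'b set \<Rightarrow> 'b set" where
  "join_in L x y = (THE z. is_lub_in L x y z)"

definition meet_in :: "'b set set \<Rightarrow> 'b set \<Rightarrow> 'b set \<Rightarrow> 'b set" where
  "meet_in L x y = (THE z. is_glb_in L x y z)"

definition set_lattice :: "'b set set \<Rightarrow> bool" where
  "set_lattice L \<longleftrightarrow> (\<forall>x\<in>L. \<forall>y\<in>L. (\<exists>z. is_lub_in L x y z) \<and> (\<exists>z. is_glb_in L x y z))"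

definition modular_lattice :: "'b set set \<Rightarrow> bool" where
  "modular_lattice L \<longleftrightarrow> set_lattice L \<and>
     (\<forall>x\<in>L. \<forall>y\<in>L. \<forall>z\<in>L. x \<subseteq> z \<longrightarrow>
        join_in L x (meet_in L y z) = meet_in L (join_in L x y) z)"

definition boolean_lattice :: "'b set set \<Rightarrow> bool" where
  "boolean_lattice L \<longleftrightarrow> set_lattice L \<and>
     (\<exists>bot\<in>L. \<exists>top\<in>L. (\<forall>x\<in>L. bot \<subseteq> x \<and> x \<subseteq> top) \<and>
        (\<forall>x\<in>L. \<exists>y\<in>L. join_in L x y = top \<and> meet_in L x y = bot)) \<and>
     (\<forall>x\<in>L. \<forall>y\<in>L. \<forall>z\<in>L.
        meet_in L x (join_in L y z) = join_in L (meet_in L x y) (meet_in L x z))"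

end

theory Submission
  imports Defs
begin

lemma half_zero: "(y::'a::real_vector) + y = 0 \<Longrightarrow> y = 0"
  by (metis scaleR_2 scaleR_eq_0_iff zero_neq_numeral)

lemma adj_zero: "adj (0::'a::cstar_algebra) = 0"
  by (metis add_cancel_right_right add_0 adj_add)

locale csub =
  fixes V :: "'a::cstar_algebra set"
  assumes zeroV: "0 \<in> V"
    and multV: "\<And>x y. x \<in> V \<Longrightarrow> y \<in> V \<Longrightarrow> x * y \<in> V"
    and adjV: "\<And>x. x \<in> V \<Longrightarrow> adj x \<in> V"
    and comm: "\<And>x y. x \<in> V \<Longrightarrow> y \<in> V \<Longrightarrow> x * y = y * x"
begin

lemma norm_zero_adj: "adj x * x = 0 \<Longrightarrow> x = (0::'a)"
  using cstar_identity[of x] by simp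

lemma reduced:
  assumes x: "x \<in> V" and xx: "x * x = 0"
  shows "x = 0"
proof -
  define h where "h = adj x * x"
  have ah: "adj h = h" unfolding h_def by (simp add: adj_mult adj_adj)
  have "h * h = adj x * (x * adj x) * x" unfolding h_def by (simp add: mult.assoc)
  also have "x * adj x = adj x * x" using comm[OF x adjV[OF x]] .
  finally have "h * h = adj x * adj x * (x * x)" by (simp add: mult.assoc)
  with xx have "adj h * h = 0" using ah by simp
  hence "h = 0" by (rule norm_zero_adj)
  thus ?thesis unfolding h_def by (rule norm_zero_adj)
qed

lemma ann_sub: "Ann V S \<subseteq> V" unfolding Ann_def by auto

lemma ann_zero: "a \<in> Ann V S \<Longrightarrow> s \<in> S \<Longrightarrow> S \<subseteq> V \<Longrightarrow> a * s = 0"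
proof -
  assume a: "a \<in> Ann V S" and s: "s \<in> S" and S: "S \<subseteq> V"
  have aV: "a \<in> V" and e: "a * s + s * a = 0" using a s unfolding Ann_def by auto
  have "s * a = a * s" using comm[OF _ aV, of s] s S by blast
  with e have "a * s + a * s = 0" by simp
  thus "a * s = 0" by (rule half_zero)
qed

lemma ann_intro: "a \<in> V \<Longrightarrow> (\<And>s. s \<in> S \<Longrightarrow> a * s = 0) \<Longrightarrow> S \<subseteq> V \<Longrightarrow> a \<in> Ann V S"
proof -
  assume aV: "a \<in> V" and z: "\<And>s. s \<in> S \<Longrightarrow> a * s = 0" and S: "S \<subseteq> V"
  have "\<forall>s\<in>S. a * s + s * a = 0"
  proof
    fix s assume s: "s \<in> S"
    have "s * a = a * s" using comm[OF _ aV, of s] s S by blast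
    thus "a * s + s * a = 0" using z[OF s] by simp
  qed
  thus "a \<in> Ann V S" using aV unfolding Ann_def by blast
qed

lemma ext: "S \<subseteq> V \<Longrightarrow> S \<subseteq> Ann V (Ann V S)"
  unfolding Ann_def by (auto simp: add.commute)

lemma anti: "S \<subseteq> T \<Longrightarrow> Ann V T \<subseteq> Ann V S"
  unfolding Ann_def by auto

lemma triple: "S \<subseteq> V \<Longrightarrow> Ann V (Ann V (Ann V S)) = Ann V S"
  by (meson ann_sub anti ext subset_antisym)

lemma pos_red:
  assumes S: "S \<subseteq> V"
  shows "Ann V S = Ann V {adj s * s | s. s \<in> S}"
proof -
  have PV: "{adj s * s | s. s \<in> S} \<subseteq> V" using S adjV multV by blast
  show ?thesis
  proof
    show "Ann V S \<subseteq> Ann V {adj s * s | s. s \<in> S}"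
    proof
      fix a assume a: "a \<in> Ann V S"
      have aV: "a \<in> V" using a ann_sub by blast
      show "a \<in> Ann V {adj s * s | s. s \<in> S}"
      proof (rule ann_intro[OF aV _ PV])
        fix t assume "t \<in> {adj s * s | s. s \<in> S}"
        then obtain s where t: "t = adj s * s" and s: "s \<in> S" by blast
        have sV: "s \<in> V" using s S by blast
        have "a * t = (a * adj s) * s" using t by (simp add: mult.assoc)
        also have "a * adj s = adj s * a" using comm[OF aV adjV[OF sV]] .
        finally show "a * t = 0" using ann_zero[OF a s S] by (simp add: mult.assoc)
      qed
    qed
  next
    show "Ann V {adj s * s | s. s \<in> S} \<subseteq> Ann V S"
    proof
      fix a assume a: "a \<in> Ann V {adj s * s | s. s \<in> S}"
      have aV: "a \<in> V" using a ann_sub by blast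
      show "a \<in> Ann V S"
      proof (rule ann_intro[OF aV _ S])
        fix s assume s: "s \<in> S"
        have sV: "s \<in> V" using s S by blast
        have z: "a * (adj s * s) = 0" using ann_zero[OF a _ PV] s by blast
        have "adj (a * s) * (a * s) = (adj s * adj a) * a * s" by (simp add: adj_mult mult.assoc)
        also have "adj s * adj a = adj a * adj s" using comm[OF adjV[OF sV] adjV[OF aV]] .
        also have "adj a * adj s * a * s = adj a * (adj s * a) * s" by (simp add: mult.assoc)
        also have "adj s * a = a * adj s" using comm[OF adjV[OF sV] aV] .
        also have "adj a * (a * adj s) * s = adj a * (a * (adj s * s))" by (simp add: mult.assoc)
        finally have "adj (a * s) * (a * s) = 0" using z by simp
        thus "a * s = 0" by (rule norm_zero_adj)
      qed
    qed
  qed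
qed

lemma P_char: "A \<in> annihilators V \<longleftrightarrow> A \<subseteq> V \<and> Ann V (Ann V A) = A"
proof
  assume "A \<in> annihilators V"
  then obtain S where S: "S \<subseteq> pos_part V" and A: "A = Ann V (Ann V S)"
    unfolding annihilators_def by blast
  have SV: "S \<subseteq> V" using S adjV multV unfolding pos_part_def by blast
  show "A \<subseteq> V \<and> Ann V (Ann V A) = A"
    using A ann_sub triple[OF ann_sub] by simp
next
  assume A: "A \<subseteq> V \<and> Ann V (Ann V A) = A"
  have "{adj s * s | s. s \<in> A} \<subseteq> pos_part V" using A unfolding pos_part_def by blast
  moreover have "A = Ann V (Ann V {adj s * s | s. s \<in> A})" using A pos_red[of A] by simp
  ultimately show "A \<in> annihilators V" unfolding annihilators_def by blast
qed

lemma ann_in_P: "S \<subseteq> V \<Longrightarrow> Ann V S \<in> annihilators V"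
  using P_char triple ann_sub by blast

lemma ideal_l: "a \<in> Ann V S \<Longrightarrow> v \<in> V \<Longrightarrow> S \<subseteq> V \<Longrightarrow> v * a \<in> Ann V S"
proof -
  assume a: "a \<in> Ann V S" and v: "v \<in> V" and S: "S \<subseteq> V"
  have aV: "a \<in> V" using a ann_sub by blast
  show ?thesis
  proof (rule ann_intro[OF multV[OF v aV] _ S])
    fix s assume "s \<in> S"
    hence "a * s = 0" using ann_zero[OF a _ S] by blast
    thus "v * a * s = 0" by (simp add: mult.assoc)
  qed
qed

lemma ideal_r: "a \<in> Ann V S \<Longrightarrow> v \<in> V \<Longrightarrow> S \<subseteq> V \<Longrightarrow> a * v \<in> Ann V S"
proof -
  assume a: "a \<in> Ann V S" and v: "v \<in> V" and S: "S \<subseteq> V"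
  have "a * v = v * a" using comm[OF _ v, of a] a ann_sub by blast
  thus ?thesis using ideal_l[OF a v S] by simp
qed

lemma glb: "A \<in> annihilators V \<Longrightarrow> B \<in> annihilators V \<Longrightarrow> is_glb_in (annihilators V) A B (A \<inter> B)"
proof -
  assume A: "A \<in> annihilators V" and B: "B \<in> annihilators V"
  have AA: "Ann V (Ann V A) = A" and AV: "A \<subseteq> V" using A P_char by auto
  have BB: "Ann V (Ann V B) = B" using B P_char by auto
  have "Ann V (Ann V (A \<inter> B)) \<subseteq> Ann V (Ann V A)" by (intro anti) auto
  moreover have "Ann V (Ann V (A \<inter> B)) \<subseteq> Ann V (Ann V B)" by (intro anti) auto
  moreover have ABV: "A \<inter> B \<subseteq> V" using AV by auto
  moreover have "A \<inter> B \<subseteq> Ann V (Ann V (A \<inter> B))" using ext[OF ABV] .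
  ultimately have "Ann V (Ann V (A \<inter> B)) = A \<inter> B" using AA BB by auto
  hence "A \<inter> B \<in> annihilators V" using P_char ABV by simp
  thus ?thesis unfolding is_glb_in_def by auto
qed

lemma lub: "A \<in> annihilators V \<Longrightarrow> B \<in> annihilators V \<Longrightarrow> is_lub_in (annihilators V) A B (Ann V (Ann V (A \<union> B)))"
  unfolding is_lub_in_def
proof (intro conjI ballI impI)
  assume A: "A \<in> annihilators V" and B: "B \<in> annihilators V"
  have U: "A \<union> B \<subseteq> V" using A B P_char by blast
  show "Ann V (Ann V (A \<union> B)) \<in> annihilators V" using ann_in_P ann_sub by blast
  show "A \<subseteq> Ann V (Ann V (A \<union> B))" using ext[OF U] by blast
  show "B \<subseteq> Ann V (Ann V (A \<union> B))" using ext[OF U] by blast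
  fix W assume W: "W \<in> annihilators V" and "A \<subseteq> W \<and> B \<subseteq> W"
  hence "Ann V (Ann V (A \<union> B)) \<subseteq> Ann V (Ann V W)" by (intro anti) auto
  thus "Ann V (Ann V (A \<union> B)) \<subseteq> W" using W P_char by simp
qed

lemma lub_unique: "is_lub_in L x y z \<Longrightarrow> join_in L x y = z"
  unfolding join_in_def by (rule the_equality) (auto simp: is_lub_in_def)

lemma glb_unique: "is_glb_in L x y z \<Longrightarrow> meet_in L x y = z"
  unfolding meet_in_def by (rule the_equality) (auto simp: is_glb_in_def)

lemma join_eq: "A \<in> annihilators V \<Longrightarrow> B \<in> annihilators V \<Longrightarrow> join_in (annihilators V) A B = Ann V (Ann V (A \<union> B))"
  using lub lub_unique by blast

lemma meet_eq: "A \<in> annihilators V \<Longrightarrow> B \<in> annihilators V \<Longrightarrow> meet_in (annihilators V) A B = A \<inter> B"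
  using glb glb_unique by blast

lemma setlat: "set_lattice (annihilators V)"
  unfolding set_lattice_def using lub glb by blast

lemma distrib:
  assumes X: "X \<in> annihilators V" and Y: "Y \<in> annihilators V" and Z: "Z \<in> annihilators V"
  shows "X \<inter> Ann V (Ann V (Y \<union> Z)) = Ann V (Ann V ((X \<inter> Y) \<union> (X \<inter> Z)))"
proof
  have XV: "X \<subseteq> V" and YV: "Y \<subseteq> V" and ZV: "Z \<subseteq> V" using X Y Z P_char by auto
  have T: "(X \<inter> Y) \<union> (X \<inter> Z) \<subseteq> V" using XV by blast
  have YZ: "Y \<union> Z \<subseteq> V" using YV ZV by blast
  have XA: "Ann V (Ann V X) = X" and YA: "Ann V (Ann V Y) = Y" and ZA: "Ann V (Ann V Z) = Z"
    using X Y Z P_char by auto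
  show "X \<inter> Ann V (Ann V (Y \<union> Z)) \<subseteq> Ann V (Ann V ((X \<inter> Y) \<union> (X \<inter> Z)))"
  proof
    fix w assume w: "w \<in> X \<inter> Ann V (Ann V (Y \<union> Z))"
    have wV: "w \<in> V" using w XV by blast
    show "w \<in> Ann V (Ann V ((X \<inter> Y) \<union> (X \<inter> Z)))"
    proof (rule ann_intro[OF wV _ ann_sub])
      fix u assume u: "u \<in> Ann V ((X \<inter> Y) \<union> (X \<inter> Z))"
      have uV: "u \<in> V" using u ann_sub by blast
      have uw: "u * w \<in> Ann V (Y \<union> Z)"
      proof (rule ann_intro[OF multV[OF uV wV] _ YZ])
        fix b assume b: "b \<in> Y \<union> Z"
        have bV: "b \<in> V" using b YZ by blast
        have wbX: "w * b \<in> X" using ideal_r[of w "Ann V X" b] w XA bV ann_sub by auto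
        have "w * b \<in> Y \<union> Z"
        proof (cases "b \<in> Y")
          case True thus ?thesis using ideal_l[of b "Ann V Y" w] YA wV ann_sub by auto
        next
          case False hence "b \<in> Z" using b by blast
          thus ?thesis using ideal_l[of b "Ann V Z" w] ZA wV ann_sub by auto
        qed
        hence "w * b \<in> (X \<inter> Y) \<union> (X \<inter> Z)" using wbX by blast
        hence "u * (w * b) = 0" using ann_zero[OF u _ T] by blast
        thus "u * w * b = 0" by (simp add: mult.assoc)
      qed
      have "w * (u * w) = 0" using w uw ann_zero[of w "Ann V (Y \<union> Z)" "u*w"] ann_sub by blast
      hence "(w * u) * (w * u) = 0" by (metis mult.assoc mult_zero_left)
      thus "w * u = 0" using reduced multV[OF wV uV] by blast
    qed
  qed
next
  have XV: "X \<subseteq> V" using X P_char by auto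
  have XA: "Ann V (Ann V X) = X" using X P_char by auto
  have YZ: "Y \<union> Z \<subseteq> V" using Y Z P_char by auto
  have M: "X \<inter> Ann V (Ann V (Y \<union> Z)) \<in> annihilators V"
    using glb[OF X ann_in_P[OF ann_sub]] unfolding is_glb_in_def by blast
  have "(X \<inter> Y) \<union> (X \<inter> Z) \<subseteq> X \<inter> Ann V (Ann V (Y \<union> Z))" using ext[OF YZ] by blast
  hence "Ann V (Ann V ((X \<inter> Y) \<union> (X \<inter> Z))) \<subseteq> Ann V (Ann V (X \<inter> Ann V (Ann V (Y \<union> Z))))"
    by (intro anti)
  thus "Ann V (Ann V ((X \<inter> Y) \<union> (X \<inter> Z))) \<subseteq> X \<inter> Ann V (Ann V (Y \<union> Z))"
    using M P_char by simp
qed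

lemma boolean: "boolean_lattice (annihilators V)"
  unfolding boolean_lattice_def
proof (intro conjI ballI)
  show "set_lattice (annihilators V)" by (rule setlat)
  let ?P = "annihilators V"
  have botP: "Ann V V \<in> ?P" using ann_in_P by blast
  have "V \<subseteq> Ann V (Ann V V)" using ext by blast
  hence "Ann V (Ann V V) = V" using ann_sub by (simp add: subset_antisym)
  hence topP: "V \<in> ?P" using P_char by blast
  have botle: "Ann V V \<subseteq> x" if xP: "x \<in> ?P" for x
  proof -
    have "Ann V V \<subseteq> Ann V (Ann V x)" using anti[OF ann_sub] .
    thus ?thesis using xP P_char by simp
  qed
  have tople: "\<And>x. x \<in> ?P \<Longrightarrow> x \<subseteq> V" using P_char by blast
  have comp: "\<And>x. x \<in> ?P \<Longrightarrow> \<exists>y\<in>?P. join_in ?P x y = V \<and> meet_in ?P x y = Ann V V"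
  proof -
    fix x assume x: "x \<in> ?P"
    have xV: "x \<subseteq> V" and xA: "Ann V (Ann V x) = x" using x P_char by auto
    have y: "Ann V x \<in> ?P" using ann_in_P xV by blast
    have z: "x \<inter> Ann V x \<subseteq> {0}"
    proof
      fix a assume a: "a \<in> x \<inter> Ann V x"
      hence "a * a = 0" using ann_zero[of a x a] xV by blast
      thus "a \<in> {0}" using reduced a xV by blast
    qed
    have "Ann V (x \<union> Ann V x) \<subseteq> Ann V (Ann V x)" by (rule anti) blast
    moreover have "Ann V (x \<union> Ann V x) \<subseteq> Ann V x" by (rule anti) blast
    ultimately have "Ann V (x \<union> Ann V x) \<subseteq> Ann V (Ann V x) \<inter> Ann V x" by blast
    hence sub0: "Ann V (x \<union> Ann V x) \<subseteq> {0}" using z xA by blast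
    have "V \<subseteq> Ann V (Ann V (x \<union> Ann V x))"
    proof
      fix v assume vV: "v \<in> V"
      show "v \<in> Ann V (Ann V (x \<union> Ann V x))"
      proof (rule ann_intro[OF vV _ ann_sub])
        fix s assume "s \<in> Ann V (x \<union> Ann V x)"
        hence "s = 0" using sub0 by blast
        thus "v * s = 0" by simp
      qed
    qed
    hence j: "join_in ?P x (Ann V x) = V" using join_eq[OF x y] ann_sub by blast
    have "x \<inter> Ann V x = Ann V V"
    proof
      have "0 \<in> Ann V V" by (rule ann_intro[OF zeroV]) auto
      thus "x \<inter> Ann V x \<subseteq> Ann V V" using z by blast
      show "Ann V V \<subseteq> x \<inter> Ann V x" using botle x y by blast
    qed
    hence "meet_in ?P x (Ann V x) = Ann V V" using meet_eq[OF x y] by simp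
    thus "\<exists>y\<in>?P. join_in ?P x y = V \<and> meet_in ?P x y = Ann V V" using j y by blast
  qed
  show "\<exists>bot\<in>?P. \<exists>top\<in>?P. (\<forall>x\<in>?P. bot \<subseteq> x \<and> x \<subseteq> top) \<and>
        (\<forall>x\<in>?P. \<exists>y\<in>?P. join_in ?P x y = top \<and> meet_in ?P x y = bot)"
  proof -
    have "(\<forall>x\<in>?P. Ann V V \<subseteq> x \<and> x \<subseteq> V) \<and>
      (\<forall>x\<in>?P. \<exists>y\<in>?P. join_in ?P x y = V \<and> meet_in ?P x y = Ann V V)"
      using botle tople comp by blast
    thus ?thesis using botP topP by blast
  qed
next
  fix x y z assume x: "x \<in> annihilators V" and y: "y \<in> annihilators V" and z: "z \<in> annihilators V"
  have "y \<union> z \<subseteq> V" using y z P_char by auto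
  hence yz: "Ann V (Ann V (y \<union> z)) \<in> annihilators V" using ann_in_P ann_sub by blast
  have xy: "x \<inter> y \<in> annihilators V" and xz: "x \<inter> z \<in> annihilators V"
    using glb[OF x y] glb[OF x z] unfolding is_glb_in_def by auto
  show "meet_in (annihilators V) x (join_in (annihilators V) y z) =
        join_in (annihilators V) (meet_in (annihilators V) x y) (meet_in (annihilators V) x z)"
    unfolding join_eq[OF y z] meet_eq[OF x yz] meet_eq[OF x y] meet_eq[OF x z] join_eq[OF xy xz]
    by (rule distrib[OF x y z])
qed

lemma modular: "modular_lattice (annihilators V)"
  unfolding modular_lattice_def
proof (intro conjI ballI impI)
  show "set_lattice (annihilators V)" by (rule setlat)
  fix x y z assume x: "x \<in> annihilators V" and y: "y \<in> annihilators V" and z: "z \<in> annihilators V"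
    and xz: "x \<subseteq> z"
  have yz: "y \<inter> z \<in> annihilators V" using glb[OF y z] unfolding is_glb_in_def by auto
  have xy: "Ann V (Ann V (x \<union> y)) \<in> annihilators V" using lub[OF x y] unfolding is_lub_in_def by auto
  have "z \<inter> Ann V (Ann V (x \<union> y)) = Ann V (Ann V ((z \<inter> x) \<union> (z \<inter> y)))" by (rule distrib[OF z x y])
  also have "(z \<inter> x) \<union> (z \<inter> y) = x \<union> (y \<inter> z)" using xz by blast
  finally show "join_in (annihilators V) x (meet_in (annihilators V) y z) =
        meet_in (annihilators V) (join_in (annihilators V) x y) z"
    using join_eq[OF x yz] meet_eq[OF y z] join_eq[OF x y] meet_eq[OF xy z] by (simp add: Int_commute)
qed

end

lemma abel_csub: "abelian_annihilator V \<Longrightarrow> csub V"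
  unfolding abelian_annihilator_def cstar_subalgebra_def csub_def by blast

theorem lemma14:
  fixes V :: "'a::cstar_algebra set"
  assumes "abelian_annihilator V"
  shows "boolean_lattice (annihilators V)
    \<and> (\<forall>W::'a set. abelian_annihilator W \<longrightarrow> modular_lattice (annihilators W))"
  using csub.boolean[OF abel_csub[OF assms]] csub.modular[OF abel_csub] by blast

end
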